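(* Let $-3<\gamma\le1$ and $0<\varepsilon\le1$. Let $\phi^\varepsilon(t,x)$ satisfy $\sup_{0\le t\le T}\{(1+t)^{5/4}\|\nabla_x\phi^\varepsilon(t)\|_{W^{1,\infty}_x}\}\le\delta$ with $\delta>0$ sufficiently small, and let $(X(\tau;t,x,v),V(\tau;t,x,v))$ be the characteristics $$\frac{\mathrm dX}{\mathrm d\tau}=\frac1\varepsilon V,\quad X(t;t,x,v)=x;\qquad\frac{\mathrm dV}{\mathrm d\tau}=-\nabla_x\phi^\varepsilon(\tau,X(\tau;t,x,v)),\quad V(t;t,x,v)=v.$$ Let $T_0>0$ be a sufficiently small fixed number. Then for $0\le\tau\le t\le\varepsilon^{1/2}T_0$ (within $[0,T]$), $$\frac1{2\varepsilon^3}|t-\tau|^3\le\Big|\det\Big(\frac{\partial X(\tau;t,x,v)}{\partial v}\Big)\Big|\le\frac2{\varepsilon^3}|t-\tau|^3 .$$ *)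

theory Defs
  imports "HOL-Analysis.Analysis"
begin

definition gradx :: "(real \<Rightarrow> real^3 \<Rightarrow> real) \<Rightarrow> real \<Rightarrow> real^3 \<Rightarrow> real^3" where
  "gradx \<phi> t x = (\<chi> i. frechet_derivative (\<phi> t) (at x) (axis i 1))"

text \<open>The smallness assumption
  sup_{0<=t<=T} (1+t)^(5/4) || grad_x phi(t) ||_{W^{1,infinity}} <= delta,
  with the W^{1,infinity} norm of the (C^1) field grad_x phi(t) taken as
  sup_x |grad_x phi(t,x)| + sup_y |D_x grad_x phi(t,y)| (operator norm).\<close>
definition potential_bound :: "real \<Rightarrow> real \<Rightarrow> (real \<Rightarrow> real^3 \<Rightarrow> real) \<Rightarrow> bool" where
  "potential_bound T \<delta> \<phi> \<longleftrightarrow>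
     (\<forall>t\<in>{0..T}. \<forall>x. \<phi> t differentiable (at x) \<and> gradx \<phi> t differentiable (at x)) \<and>
     (\<forall>t\<in>{0..T}. \<forall>x y. (1 + t) powr (5/4) *
         (norm (gradx \<phi> t x) + onorm (frechet_derivative (gradx \<phi> t) (at y))) \<le> \<delta>)"

text \<open>(X(tau;t,x,v), V(tau;t,x,v)) are the characteristics:
  dX/dtau = V/eps, X(t;t,x,v) = x;  dV/dtau = -grad_x phi(tau, X), V(t;t,x,v) = v,
  on the time interval [0,T]; they are assumed differentiable in v
  (so that the Jacobian dX/dv makes sense).\<close>
definition characteristics ::
  "real \<Rightarrow> real \<Rightarrow> (real \<Rightarrow> real^3 \<Rightarrow> real)
   \<Rightarrow> (real \<Rightarrow> real \<Rightarrow> real^3 \<Rightarrow> real^3 \<Rightarrow> real^3)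
   \<Rightarrow> (real \<Rightarrow> real \<Rightarrow> real^3 \<Rightarrow> real^3 \<Rightarrow> real^3) \<Rightarrow> bool" where
  "characteristics \<epsilon> T \<phi> X V \<longleftrightarrow>
     (\<forall>t\<in>{0..T}. \<forall>x v.
        X t t x v = x \<and> V t t x v = v \<and>
        (\<forall>\<tau>\<in>{0..T}.
           ((\<lambda>s. X s t x v) has_vector_derivative ((1 / \<epsilon>) *\<^sub>R V \<tau> t x v)) (at \<tau> within {0..T}) \<and>
           ((\<lambda>s. V s t x v) has_vector_derivative (- gradx \<phi> \<tau> (X \<tau> t x v))) (at \<tau> within {0..T}) \<and>
           (\<lambda>w. X \<tau> t x w) differentiable (at v) \<and>
           (\<lambda>w. V \<tau> t x w) differentiable (at v)))"

definition jac_det_v :: "(real \<Rightarrow> real \<Rightarrow> real^3 \<Rightarrow> real^3 \<Rightarrow> real^3) \<Rightarrow> real \<Rightarrow> real \<Rightarrow> real^3 \<Rightarrow> real^3 \<Rightarrow> real" where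
  "jac_det_v X \<tau> t x v = det (matrix (frechet_derivative (\<lambda>w. X \<tau> t x w) (at v)))"

end

theory Submission
  imports Defs
begin


lemma mvt1:
  fixes f :: "real \<Rightarrow> 'b::real_normed_vector"
  assumes "a \<le> b"
    and d: "\<And>s. s \<in> {a..b} \<Longrightarrow> (f has_vector_derivative f' s) (at s within {a..b})"
    and B: "\<And>s. s \<in> {a..b} \<Longrightarrow> norm (f' s) \<le> B"
  shows "norm (f b - f a) \<le> B * (b - a)"
proof -
  have "norm (f b - f a) \<le> B * norm (b - a)"
  proof (rule differentiable_bound[where f' = "\<lambda>s h. h *\<^sub>R f' s"])
    show "convex {a..b}" by simp
    show "(f has_derivative (\<lambda>h. h *\<^sub>R f' x)) (at x within {a..b})" if "x \<in> {a..b}" for x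
      using d[OF that] by (simp add: has_vector_derivative_def)
    show "onorm (\<lambda>h. h *\<^sub>R f' x) \<le> B" if "x \<in> {a..b}" for x
      using onorm_scaleR_left[OF bounded_linear_ident, of "f' x"] B[OF that] by (simp add: onorm_id)
  qed (use assms in auto)
  then show ?thesis using assms by simp
qed

lemma deriv_lip:
  fixes f :: "'a::real_normed_vector \<Rightarrow> 'b::real_normed_vector"
  assumes d: "(f has_derivative f') (at v)"
    and L: "\<And>w. norm (f w - f v) \<le> c * norm (w - v)"
  shows "norm (f' h) \<le> c * norm h"
proof (cases "h = 0")
  case True
  have "linear f'" using d has_derivative_linear by blast
  then show ?thesis using True by (simp add: linear_0)
next
  case False
  have bl: "bounded_linear f'" using d has_derivative_bounded_linear by blast
  show ?thesis
  proof (rule field_le_epsilon)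
    fix e :: real assume e: "0 < e"
    from d[unfolded has_derivative_at_alt] e obtain r where r: "r > 0"
      and rr: "\<And>y. norm (y - v) < r \<Longrightarrow> norm (f y - f v - f' (y - v)) \<le> (e / norm h) * norm (y - v)"
      using False by (meson divide_pos_pos zero_less_norm_iff)
    define s where "s = r / (2 * norm h)"
    have s: "s > 0" using r False by (simp add: s_def)
    have "norm (s *\<^sub>R h) < r" using r False by (simp add: s_def)
    then have 1: "norm (f (v + s *\<^sub>R h) - f v - f' (s *\<^sub>R h)) \<le> (e / norm h) * norm (s *\<^sub>R h)"
      using rr[of "v + s *\<^sub>R h"] by simp
    have 2: "norm (f (v + s *\<^sub>R h) - f v) \<le> c * norm (s *\<^sub>R h)" using L[of "v + s *\<^sub>R h"] by simp
    have "norm (f' (s *\<^sub>R h)) \<le> norm (f (v + s *\<^sub>R h) - f v) + norm (f (v + s *\<^sub>R h) - f v - f' (s *\<^sub>R h))"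
      using norm_triangle_ineq4[of "f (v + s *\<^sub>R h) - f v" "f (v + s *\<^sub>R h) - f v - f' (s *\<^sub>R h)"] by simp
    also have "\<dots> \<le> c * norm (s *\<^sub>R h) + (e / norm h) * norm (s *\<^sub>R h)" using 1 2 by linarith
    finally have "s * norm (f' h) \<le> s * (c * norm h + e)"
      using s False by (simp add: linear_cmul[OF bounded_linear.linear[OF bl]] algebra_simps)
    then show "norm (f' h) \<le> c * norm h + e" using s by simp
  qed
qed



lemma core:
  fixes D U G :: "real \<Rightarrow> real^3" and \<epsilon> L T \<tau> t :: real
  assumes eps: "0 < \<epsilon>" and L: "0 \<le> L" "L \<le> 1/200"
    and tt: "0 \<le> \<tau>" "\<tau> \<le> t" "t \<le> T" "t^2 \<le> \<epsilon>"
    and dD: "\<And>s. s \<in> {0..T} \<Longrightarrow> (D has_vector_derivative ((1/\<epsilon>) *\<^sub>R U s)) (at s within {0..T})"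
    and dU: "\<And>s. s \<in> {0..T} \<Longrightarrow> (U has_vector_derivative G s) (at s within {0..T})"
    and G: "\<And>s. s \<in> {0..T} \<Longrightarrow> norm (G s) \<le> L * norm (D s)"
    and D0: "D t = 0"
  shows "norm (D \<tau> + ((t - \<tau>)/\<epsilon>) *\<^sub>R U t) \<le> 2 * L * ((t - \<tau>)/\<epsilon>) * norm (U t)"
proof -
  have sub: "{\<tau>..t} \<subseteq> {0..T}" using tt by auto
  have "continuous_on {0..T} D"
    unfolding continuous_on_eq_continuous_within
    using dD has_vector_derivative_continuous by blast
  then have "continuous_on {\<tau>..t} (\<lambda>s. norm (D s))"
    using sub by (intro continuous_intros) (auto intro: continuous_on_subset)
  then obtain r0 where r0: "r0 \<in> {\<tau>..t}" and mx: "\<And>r. r \<in> {\<tau>..t} \<Longrightarrow> norm (D r) \<le> norm (D r0)"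
    using continuous_attains_sup[of "{\<tau>..t}" "\<lambda>s. norm (D s)"] tt by auto
  define M where "M = norm (D r0)"
  have M0: "0 \<le> M" by (simp add: M_def)
  have Ub: "norm (U t - U r) \<le> L * M * (t - r)" if r: "r \<in> {\<tau>..t}" for r
  proof (rule mvt1)
    show "r \<le> t" using r by auto
    fix s assume s: "s \<in> {r..t}"
    then have s': "s \<in> {0..T}" "s \<in> {\<tau>..t}" using r sub by auto
    show "(U has_vector_derivative G s) (at s within {r..t})"
      using dU[OF s'(1)] has_vector_derivative_within_subset[of U "G s" s "{0..T}" "{r..t}"] r sub by auto
    show "norm (G s) \<le> L * M"
      using G[OF s'(1)] mx[OF s'(2)] L unfolding M_def by (meson mult_left_mono order_trans)
  qed
  define F where "F s = D s + ((t - s)/\<epsilon>) *\<^sub>R U t" for s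
  have Fb: "norm (F t - F r) \<le> (L * M * (t - \<tau>) / \<epsilon>) * (t - r)" if r: "r \<in> {\<tau>..t}" for r
  proof (rule mvt1[where f' = "\<lambda>s. (1/\<epsilon>) *\<^sub>R U s - (1/\<epsilon>) *\<^sub>R U t"])
    show "r \<le> t" using r by auto
    fix s assume s: "s \<in> {r..t}"
    then have s': "s \<in> {0..T}" "s \<in> {\<tau>..t}" using r sub by auto
    have "(D has_vector_derivative ((1/\<epsilon>) *\<^sub>R U s)) (at s within {r..t})"
      using dD[OF s'(1)] has_vector_derivative_within_subset[of D _ s "{0..T}" "{r..t}"] r sub by auto
    then show "(F has_vector_derivative (1/\<epsilon>) *\<^sub>R U s - (1/\<epsilon>) *\<^sub>R U t) (at s within {r..t})"
      unfolding F_def using eps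
      by (auto intro!: derivative_eq_intros simp: algebra_simps divide_simps)
    have "norm ((1/\<epsilon>) *\<^sub>R U s - (1/\<epsilon>) *\<^sub>R U t) = norm (U t - U s) / \<epsilon>"
      using eps by (simp add: scaleR_diff_right[symmetric] norm_minus_commute)
    also have "\<dots> \<le> L * M * (t - s) / \<epsilon>"
      using Ub[OF s'(2)] eps by (simp add: divide_right_mono)
    also have "\<dots> \<le> L * M * (t - \<tau>) / \<epsilon>"
      using s' eps L M0 by (intro divide_right_mono mult_left_mono) auto
    finally show "norm ((1/\<epsilon>) *\<^sub>R U s - (1/\<epsilon>) *\<^sub>R U t) \<le> L * M * (t - \<tau>) / \<epsilon>" .
  qed
  have Ft: "F t = 0" by (simp add: F_def D0)
  have sq: "(t - \<tau>) * (t - \<tau>) \<le> \<epsilon>"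
  proof -
    have "(t - \<tau>) * (t - \<tau>) \<le> t * t" using tt by (intro mult_mono) auto
    then show ?thesis using tt by (simp add: power2_eq_square)
  qed
  have Fr: "norm (F r) \<le> L * M" if r: "r \<in> {\<tau>..t}" for r
  proof -
    have "norm (F r) \<le> (L * M * (t - \<tau>) / \<epsilon>) * (t - r)" using Fb[OF r] Ft by simp
    also have "\<dots> \<le> (L * M * (t - \<tau>) / \<epsilon>) * (t - \<tau>)"
      using r L M0 eps tt by (intro mult_left_mono) auto
    also have "\<dots> = L * M * ((t - \<tau>) * (t - \<tau>)) / \<epsilon>" by simp
    also have "\<dots> \<le> L * M * \<epsilon> / \<epsilon>"
      using sq L M0 eps by (intro divide_right_mono mult_left_mono) auto
    finally show ?thesis using eps by simp
  qed
  define a where "a = (t - \<tau>) / \<epsilon>"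
  have a0: "0 \<le> a" using tt eps by (simp add: a_def)
  have "M \<le> norm (F r0) + norm (((t - r0)/\<epsilon>) *\<^sub>R U t)"
    unfolding M_def F_def using norm_triangle_ineq4[of "D r0 + ((t - r0)/\<epsilon>) *\<^sub>R U t" "((t - r0)/\<epsilon>) *\<^sub>R U t"]
    by simp
  also have "norm (((t - r0)/\<epsilon>) *\<^sub>R U t) \<le> a * norm (U t)"
    using r0 eps unfolding a_def by (auto intro!: mult_right_mono divide_right_mono)
  finally have "M \<le> L * M + a * norm (U t)" using Fr[OF r0] by linarith
  moreover have "L * M \<le> (1/2) * M" using L M0 by (intro mult_right_mono) auto
  ultimately have M2: "M \<le> 2 * a * norm (U t)" by linarith
  have "norm (F \<tau>) \<le> L * M" using Fr tt by auto
  also have "\<dots> \<le> L * (2 * a * norm (U t))" using M2 L by (intro mult_left_mono) auto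
  finally show ?thesis unfolding F_def a_def by (simp add: algebra_simps)
qed



lemma abs3: fixes x y z X Y Z :: real
  assumes "\<bar>x\<bar> \<le> X" "\<bar>y\<bar> \<le> Y" "\<bar>z\<bar> \<le> Z"
  shows "\<bar>x * y * z\<bar> \<le> X * Y * Z"
proof -
  have "\<bar>x * y * z\<bar> = \<bar>x\<bar> * \<bar>y\<bar> * \<bar>z\<bar>" by (simp add: abs_mult)
  also have "\<dots> \<le> X * Y * Z"
    by (intro mult_mono) (use assms in auto)
  finally show ?thesis .
qed

lemma abs2: fixes x y X Y :: real
  assumes "\<bar>x\<bar> \<le> X" "\<bar>y\<bar> \<le> Y"
  shows "\<bar>x * y\<bar> \<le> X * Y"
  by (simp add: abs_mult assms mult_mono')

lemma comb3: fixes A B C x y z :: real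
  assumes "\<bar>A\<bar> \<le> x" "\<bar>B\<bar> \<le> y" "\<bar>C\<bar> \<le> z"
  shows "\<bar>A - B + C\<bar> \<le> x + y + z"
  using assms by linarith

lemma comb6: fixes X A Q1 Q2 R1 R2 R3 b0 b1 b2 b3 b4 b5 :: real
  assumes "\<bar>X + A\<bar> \<le> b0" "\<bar>Q1\<bar> \<le> b1" "\<bar>Q2\<bar> \<le> b2" "\<bar>R1\<bar> \<le> b3" "\<bar>R2\<bar> \<le> b4" "\<bar>R3\<bar> \<le> b5"
    "b0 + b1 + b2 + b3 + b4 + b5 \<le> B"
  shows "\<bar>X + Q1 + Q2 - R1 - R2 - R3 + A\<bar> \<le> B"
  using assms by linarith

lemma det_poly:
  fixes a c e11 e12 e13 e21 e22 e23 e31 e32 e33 :: real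
  assumes a: "0 \<le> a" and c: "c = a / 100"
    and "\<bar>e11\<bar> \<le> c" "\<bar>e12\<bar> \<le> c" "\<bar>e13\<bar> \<le> c"
    and "\<bar>e21\<bar> \<le> c" "\<bar>e22\<bar> \<le> c" "\<bar>e23\<bar> \<le> c"
    and "\<bar>e31\<bar> \<le> c" "\<bar>e32\<bar> \<le> c" "\<bar>e33\<bar> \<le> c"
  shows "\<bar>(e11 - a) * (e22 - a) * (e33 - a) + e12 * e23 * e31 + e13 * e21 * e32
          - (e11 - a) * e23 * e32 - e12 * e21 * (e33 - a) - e13 * (e22 - a) * e31 + a^3\<bar> \<le> a^3 / 2"
proof -
  have c0: "0 \<le> c" using a c by simp
  have d1: "\<bar>e11 - a\<bar> \<le> a + c" "\<bar>e22 - a\<bar> \<le> a + c" "\<bar>e33 - a\<bar> \<le> a + c"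
    using assms by auto
  have t1: "\<bar>e12 * e23 * e31\<bar> \<le> c * c * c" "\<bar>e13 * e21 * e32\<bar> \<le> c * c * c"
    by (intro abs3; fact)+
  have t2: "\<bar>(e11 - a) * e23 * e32\<bar> \<le> (a + c) * c * c"
       "\<bar>e12 * e21 * (e33 - a)\<bar> \<le> c * c * (a + c)"
       "\<bar>e13 * (e22 - a) * e31\<bar> \<le> c * (a + c) * c"
    by (intro abs3; fact)+
  have eq: "(e11 - a) * (e22 - a) * (e33 - a) + a^3 =
     a^2 * (e11 + e22 + e33) - a * (e11 * e22 + e11 * e33 + e22 * e33) + e11 * e22 * e33"
    by (simp add: algebra_simps power2_eq_square power3_eq_cube)
  have s1: "\<bar>a^2 * (e11 + e22 + e33)\<bar> \<le> a^2 * (3 * c)"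
  proof -
    have "\<bar>e11 + e22 + e33\<bar> \<le> 3 * c" using assms(3,7,11) by linarith
    then show ?thesis by (simp add: abs_mult mult_left_mono)
  qed
  have p1: "\<bar>e11 * e22\<bar> \<le> c * c" "\<bar>e11 * e33\<bar> \<le> c * c" "\<bar>e22 * e33\<bar> \<le> c * c"
    by (intro abs2; fact)+
  have s2: "\<bar>a * (e11 * e22 + e11 * e33 + e22 * e33)\<bar> \<le> a * (3 * (c * c))"
  proof -
    have "\<bar>e11 * e22 + e11 * e33 + e22 * e33\<bar> \<le> 3 * (c * c)" using p1 by linarith
    then show ?thesis using a by (simp add: abs_mult mult_left_mono)
  qed
  have s3: "\<bar>e11 * e22 * e33\<bar> \<le> c * c * c" by (intro abs3; fact)+
  have calc: "\<bar>(e11 - a) * (e22 - a) * (e33 - a) + a^3\<bar> \<le> a^2 * (3 * c) + a * (3 * (c * c)) + c * c * c"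
    unfolding eq by (rule comb3[OF s1 s2 s3])
  have num: "a^2 * (3 * c) + a * (3 * (c * c)) + c * c * c + c * c * c + c * c * c + (a + c) * c * c
       + c * c * (a + c) + c * (a + c) * c \<le> a^3 / 2"
    using a unfolding c by (simp add: power2_eq_square power3_eq_cube algebra_simps)
  show ?thesis by (rule comb6[OF calc t1(1) t1(2) t2(1) t2(2) t2(3) num])
qed

lemma det_close:
  fixes M :: "real^3^3" and a :: real
  assumes a: "0 \<le> a"
    and E: "\<And>i j. \<bar>M $ i $ j + (if i = j then a else 0)\<bar> \<le> a / 100"
  shows "a^3 / 2 \<le> \<bar>det M\<bar> \<and> \<bar>det M\<bar> \<le> 2 * a^3"
proof -
  define e where "e i j = M $ i $ j + (if i = j then a else 0)" for i j
  have eb: "\<bar>e i j\<bar> \<le> a / 100" for i j using E by (simp add: e_def)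
  have m: "M$1$1 = e 1 1 - a" "M$1$2 = e 1 2" "M$1$3 = e 1 3"
     "M$2$1 = e 2 1" "M$2$2 = e 2 2 - a" "M$2$3 = e 2 3"
     "M$3$1 = e 3 1" "M$3$2 = e 3 2" "M$3$3 = e 3 3 - a"
    by (simp_all add: e_def)
  have "\<bar>det M + a^3\<bar> \<le> a^3 / 2"
    unfolding det_3 m
    by (rule det_poly[OF a refl eb[of 1 1] eb[of 1 2] eb[of 1 3] eb[of 2 1] eb[of 2 2] eb[of 2 3] eb[of 3 1] eb[of 3 2] eb[of 3 3]])
  then show ?thesis using a by (auto simp: abs_if split: if_splits)
qed



theorem lemma3p4:
  fixes \<gamma> :: real
  assumes "-3 < \<gamma>" and "\<gamma> \<le> 1"
  shows "\<exists>\<delta>>0. \<exists>T0>0. \<forall>(\<epsilon>::real) (T::real) (\<phi>::real \<Rightarrow> real^3 \<Rightarrow> real)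
            (X::real \<Rightarrow> real \<Rightarrow> real^3 \<Rightarrow> real^3 \<Rightarrow> real^3)
            (V::real \<Rightarrow> real \<Rightarrow> real^3 \<Rightarrow> real^3 \<Rightarrow> real^3).
     0 < \<epsilon> \<and> \<epsilon> \<le> 1 \<and> potential_bound T \<delta> \<phi> \<and> characteristics \<epsilon> T \<phi> X V \<longrightarrow>
     (\<forall>\<tau> t x v. 0 \<le> \<tau> \<and> \<tau> \<le> t \<and> t \<le> sqrt \<epsilon> * T0 \<and> t \<le> T \<longrightarrow>
        1 / (2 * \<epsilon> ^ 3) * \<bar>t - \<tau>\<bar> ^ 3 \<le> \<bar>jac_det_v X \<tau> t x v\<bar> \<and>
        \<bar>jac_det_v X \<tau> t x v\<bar> \<le> 2 / \<epsilon> ^ 3 * \<bar>t - \<tau>\<bar> ^ 3)"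
proof (intro exI[of _ "1/200"] conjI allI impI)
  fix \<epsilon> T :: real and \<phi> :: "real \<Rightarrow> real^3 \<Rightarrow> real"
    and X V :: "real \<Rightarrow> real \<Rightarrow> real^3 \<Rightarrow> real^3 \<Rightarrow> real^3" and \<tau> t :: real and x v :: "real^3"
  assume H: "0 < \<epsilon> \<and> \<epsilon> \<le> 1 \<and> potential_bound T (1/200) \<phi> \<and> characteristics \<epsilon> T \<phi> X V"
    and R: "0 \<le> \<tau> \<and> \<tau> \<le> t \<and> t \<le> sqrt \<epsilon> * (1/200) \<and> t \<le> T"
  have eps: "0 < \<epsilon>" using H by auto
  have tt: "0 \<le> \<tau>" "\<tau> \<le> t" "t \<le> T" using R by auto
  have t2: "t^2 \<le> \<epsilon>"
  proof -
    have "0 \<le> sqrt \<epsilon>" using eps by simp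
    then have "t \<le> sqrt \<epsilon>" using R by linarith
    then have "t^2 \<le> (sqrt \<epsilon>)^2" using R by (intro power_mono) auto
    then show ?thesis using eps by simp
  qed
  have tT: "t \<in> {0..T}" "\<tau> \<in> {0..T}" using tt by auto
  have PB: "\<And>r y. r \<in> {0..T} \<Longrightarrow> gradx \<phi> r differentiable (at y)"
    and PB2: "\<And>r y z. r \<in> {0..T} \<Longrightarrow> (1 + r) powr (5/4) *
         (norm (gradx \<phi> r y) + onorm (frechet_derivative (gradx \<phi> r) (at z))) \<le> 1/200"
    using H unfolding potential_bound_def by blast+
  have CH: "\<And>r w. r \<in> {0..T} \<Longrightarrow>
           ((\<lambda>s. X s t x w) has_vector_derivative ((1 / \<epsilon>) *\<^sub>R V r t x w)) (at r within {0..T}) \<and>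
           ((\<lambda>s. V s t x w) has_vector_derivative (- gradx \<phi> r (X r t x w))) (at r within {0..T}) \<and>
           (\<lambda>w. X r t x w) differentiable (at w)"
    and CH0: "\<And>w. X t t x w = x \<and> V t t x w = w"
    using H tT(1) unfolding characteristics_def by blast+
  have lip: "norm (gradx \<phi> r y - gradx \<phi> r z) \<le> 1/200 * norm (y - z)" if r: "r \<in> {0..T}" for r y z
  proof (rule differentiable_bound[where S = UNIV and f' = "\<lambda>y. frechet_derivative (gradx \<phi> r) (at y)"])
    fix y :: "real^3"
    have d: "(gradx \<phi> r has_derivative frechet_derivative (gradx \<phi> r) (at y)) (at y)"
      using PB[OF r] frechet_derivative_works by blast
    then show "(gradx \<phi> r has_derivative frechet_derivative (gradx \<phi> r) (at y)) (at y within UNIV)" by simp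
    have o0: "0 \<le> onorm (frechet_derivative (gradx \<phi> r) (at y))"
      using d has_derivative_bounded_linear onorm_pos_le by blast
    have p1: "1 \<le> (1 + r) powr (5/4)" using r by (intro ge_one_powr_ge_zero) auto
    have "onorm (frechet_derivative (gradx \<phi> r) (at y)) \<le>
          norm (gradx \<phi> r y) + onorm (frechet_derivative (gradx \<phi> r) (at y))" by simp
    also have "\<dots> \<le> (1 + r) powr (5/4) * (norm (gradx \<phi> r y) + onorm (frechet_derivative (gradx \<phi> r) (at y)))"
      using mult_right_mono[OF p1, of "norm (gradx \<phi> r y) + onorm (frechet_derivative (gradx \<phi> r) (at y))"] o0 by simp
    also have "\<dots> \<le> 1/200" using PB2[OF r] .
    finally show "onorm (frechet_derivative (gradx \<phi> r) (at y)) \<le> 1/200" .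
  qed auto
  define a where "a = (t - \<tau>) / \<epsilon>"
  have a0: "0 \<le> a" using tt eps by (simp add: a_def)
  have key: "norm ((X \<tau> t x w + a *\<^sub>R w) - (X \<tau> t x v + a *\<^sub>R v)) \<le> a / 100 * norm (w - v)" for w
  proof -
    define D where "D s = X s t x w - X s t x v" for s
    define U where "U s = V s t x w - V s t x v" for s
    define G where "G s = - gradx \<phi> s (X s t x w) - - gradx \<phi> s (X s t x v)" for s
    have "norm (D \<tau> + ((t - \<tau>)/\<epsilon>) *\<^sub>R U t) \<le> 2 * (1/200) * ((t - \<tau>)/\<epsilon>) * norm (U t)"
    proof (rule core[OF eps _ _ tt t2])
      fix s assume s: "s \<in> {0..T}"
      show "(D has_vector_derivative (1 / \<epsilon>) *\<^sub>R U s) (at s within {0..T})"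
        unfolding D_def U_def scaleR_diff_right
        using CH[OF s, of w] CH[OF s, of v] by (intro has_vector_derivative_diff) auto
      show "(U has_vector_derivative G s) (at s within {0..T})"
        unfolding U_def G_def
        using CH[OF s, of w] CH[OF s, of v] by (intro has_vector_derivative_diff) auto
      show "norm (G s) \<le> 1/200 * norm (D s)"
        unfolding G_def D_def using lip[OF s, of "X s t x w" "X s t x v"]
        by (simp add: norm_minus_commute)
    qed (auto simp: D_def CH0)
    moreover have "U t = w - v" by (simp add: U_def CH0)
    ultimately show ?thesis unfolding D_def a_def by (simp add: algebra_simps)
  qed
  define A where "A = frechet_derivative (\<lambda>w. X \<tau> t x w) (at v)"
  have dA: "((\<lambda>w. X \<tau> t x w) has_derivative A) (at v)"
    using CH[OF tT(2), of v] frechet_derivative_works unfolding A_def by blast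
  have df: "((\<lambda>w. X \<tau> t x w + a *\<^sub>R w) has_derivative (\<lambda>h. A h + a *\<^sub>R h)) (at v)"
    by (intro derivative_intros dA)
  have nb: "norm (A h + a *\<^sub>R h) \<le> a / 100 * norm h" for h
    using deriv_lip[OF df key] .
  have E: "\<bar>matrix A $ i $ j + (if i = j then a else 0)\<bar> \<le> a / 100" for i j
  proof -
    have "matrix A $ i $ j + (if i = j then a else 0) = (A (axis j 1) + a *\<^sub>R axis j 1) $ i"
      by (simp add: matrix_def axis_def)
    also have "\<bar>\<dots>\<bar> \<le> norm (A (axis j 1) + a *\<^sub>R axis j 1)" by (rule component_le_norm_cart)
    also have "\<dots> \<le> a / 100" using nb[of "axis j 1"] by simp
    finally show ?thesis .
  qed
  have DC: "a^3 / 2 \<le> \<bar>det (matrix A)\<bar> \<and> \<bar>det (matrix A)\<bar> \<le> 2 * a^3"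
    by (rule det_close[OF a0 E])
  have J: "jac_det_v X \<tau> t x v = det (matrix A)" unfolding jac_det_v_def A_def ..
  have a3: "a^3 = \<bar>t - \<tau>\<bar>^3 / \<epsilon>^3" using tt by (simp add: a_def power_divide)
  show "1 / (2 * \<epsilon> ^ 3) * \<bar>t - \<tau>\<bar> ^ 3 \<le> \<bar>jac_det_v X \<tau> t x v\<bar>"
    using DC unfolding J a3 by simp
  show "\<bar>jac_det_v X \<tau> t x v\<bar> \<le> 2 / \<epsilon> ^ 3 * \<bar>t - \<tau>\<bar> ^ 3"
    using DC unfolding J a3 by simp
qed auto

end
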